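(* Let $h$ be odd and let $\psi$ be an additive character of $\mathbb{F}_{q^2}$ of conductor $q^2$. If $\nu$ is a character of $H'$ whose restriction to $H_0'$ is $\widetilde\psi$, then $\nu=\chi^\sharp$ for some $\chi\in\mathcal A_\psi$. Moreover, $$\mathrm{Ind}_{H_0'}^{H'}(\widetilde\psi)\cong\bigoplus_{\chi\in\mathcal A_\psi}\chi^\sharp.$$
   Context: Let $p$ be a prime, $q$ a power of $p$, $\ell\ne p$, and $h\ge3$ an odd integer. For a commutative $\mathbb{F}_q$-algebra $A$, $U_h^{2,q}(A)$ is the set of formal expressions $1+\sum_{i=1}^{2(h-1)}a_i\tau^i$ ($a_i\in A$) with multiplication obtained by extending $(a\tau^i)(b\tau^j)=ab^{q^i}\tau^{i+j}$ bi-additively, $\tau^0=1$, $\tau^k=0$ for $k>2(h-1)$. In $\mathcal U=U_h^{2,q}(\mathbb{F}_{q^2})$ let $H_0'=\{1+\sum a_i\tau^i: a_i=0\text{ unless } i=2(h-1)\text{ or } i\text{ is odd with } i>h-1\}$ and $H'=\{1+\sum a_i\tau^i: a_i=0\text{ for all odd } i\le h-1\}$. Let $L=\mathbb{F}_{q^2}((\pi))$ and $U_L^i=1+\pi^i\mathbb{F}_{q^2}[[\pi]]$. An additive character $\psi\colon\mathbb{F}_{q^2}\to\overline{\mathbb{Q}}_\ell^\times$ has conductor $q^2$ if there exists $x$ with $\psi(x^q)\ne\psi(x)$; $\widetilde\psi(1+\sum a_i\tau^i)=\psi(a_{2(h-1)})$ on $H_0'$. $\mathcal A_\psi$ is the set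 of characters $\chi$ of $U_L^1/U_L^h$ with $\chi(1+a\pi^{h-1})=\psi(a)$ for all $a\in\mathbb{F}_{q^2}$. For $\chi\in\mathcal A_\psi$, $\chi^\sharp$ is the character of $H'$ given by $\chi^\sharp(1+\sum a_i\tau^i)=\chi(1+a_2\pi+a_4\pi^2+\cdots+a_{2(h-1)}\pi^{h-1})$. *)

theory Defs
  imports Complex_Main "HOL-Algebra.Group" "HOL-Computational_Algebra.Primes"
begin

text \<open>Elements of U_h^{2,q}(F): the element 1 + sum a_i tau^i (1 <= i <= 2(h-1)) is
  represented by its coefficient function a, with a i = 0 for i = 0 and i > 2(h-1).\<close>

definition U_carrier :: "nat \<Rightarrow> (nat \<Rightarrow> 'a::field) set" where
  "U_carrier h = {a. \<forall>i. (i = 0 \<or> 2*(h-1) < i) \<longrightarrow> a i = 0}"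

text \<open>(a tau^i)(b tau^j) = a b^(q^i) tau^(i+j), extended bi-additively, truncated.\<close>
definition U_mult :: "nat \<Rightarrow> nat \<Rightarrow> (nat \<Rightarrow> 'a::field) \<Rightarrow> (nat \<Rightarrow> 'a) \<Rightarrow> (nat \<Rightarrow> 'a)" where
  "U_mult h q a b = (\<lambda>k. if 1 \<le> k \<and> k \<le> 2*(h-1)
       then a k + b k + (\<Sum>i\<in>{1..<k}. a i * (b (k-i)) ^ (q ^ i)) else 0)"

definition U_grp :: "nat \<Rightarrow> nat \<Rightarrow> (nat \<Rightarrow> 'a::field) monoid" where
  "U_grp h q = \<lparr>carrier = U_carrier h, monoid.mult = U_mult h q, one = (\<lambda>_. 0)\<rparr>"

definition H0'_carrier :: "nat \<Rightarrow> (nat \<Rightarrow> 'a::field) set" where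
  "H0'_carrier h = {a \<in> U_carrier h. \<forall>i. a i \<noteq> 0 \<longrightarrow> (i = 2*(h-1) \<or> (odd i \<and> h-1 < i))}"

definition H'_carrier :: "nat \<Rightarrow> (nat \<Rightarrow> 'a::field) set" where
  "H'_carrier h = {a \<in> U_carrier h. \<forall>i. odd i \<and> i \<le> h-1 \<longrightarrow> a i = 0}"

definition H0'_grp :: "nat \<Rightarrow> nat \<Rightarrow> (nat \<Rightarrow> 'a::field) monoid" where
  "H0'_grp h q = (U_grp h q)\<lparr>carrier := H0'_carrier h\<rparr>"

definition H'_grp :: "nat \<Rightarrow> nat \<Rightarrow> (nat \<Rightarrow> 'a::field) monoid" where
  "H'_grp h q = (U_grp h q)\<lparr>carrier := H'_carrier h\<rparr>"

text \<open>U_L^1/U_L^h: the class of 1 + c_1 pi + ... + c_(h-1) pi^(h-1) is represented by c,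
  with c i = 0 for i = 0 and i >= h; multiplication is power series multiplication mod pi^h.\<close>
definition UL_carrier :: "nat \<Rightarrow> (nat \<Rightarrow> 'a::field) set" where
  "UL_carrier h = {c. \<forall>i. (i = 0 \<or> h \<le> i) \<longrightarrow> c i = 0}"

definition UL_mult :: "nat \<Rightarrow> (nat \<Rightarrow> 'a::field) \<Rightarrow> (nat \<Rightarrow> 'a) \<Rightarrow> (nat \<Rightarrow> 'a)" where
  "UL_mult h c d = (\<lambda>k. if 1 \<le> k \<and> k < h
       then c k + d k + (\<Sum>i\<in>{1..<k}. c i * d (k-i)) else 0)"

definition UL_grp :: "nat \<Rightarrow> (nat \<Rightarrow> 'a::field) monoid" where
  "UL_grp h = \<lparr>carrier = UL_carrier h, monoid.mult = UL_mult h, one = (\<lambda>_. 0)\<rparr>"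

definition is_character :: "('g, 'm) monoid_scheme \<Rightarrow> ('g \<Rightarrow> complex) \<Rightarrow> bool" where
  "is_character G \<chi> \<longleftrightarrow> (\<forall>x\<in>carrier G. \<chi> x \<noteq> 0)
     \<and> (\<forall>x\<in>carrier G. \<forall>y\<in>carrier G. \<chi> (x \<otimes>\<^bsub>G\<^esub> y) = \<chi> x * \<chi> y)
     \<and> (\<forall>x. x \<notin> carrier G \<longrightarrow> \<chi> x = 0)"

definition additive_character :: "('a::field \<Rightarrow> complex) \<Rightarrow> bool" where
  "additive_character \<psi> \<longleftrightarrow> (\<forall>x. \<psi> x \<noteq> 0) \<and> (\<forall>x y. \<psi> (x + y) = \<psi> x * \<psi> y)"

definition has_conductor_q2 :: "nat \<Rightarrow> ('a::field \<Rightarrow> complex) \<Rightarrow> bool" where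
  "has_conductor_q2 q \<psi> \<longleftrightarrow> (\<exists>x. \<psi> (x ^ q) \<noteq> \<psi> x)"

definition psi_tilde :: "nat \<Rightarrow> ('a::field \<Rightarrow> complex) \<Rightarrow> (nat \<Rightarrow> 'a) \<Rightarrow> complex" where
  "psi_tilde h \<psi> a = (if a \<in> H0'_carrier h then \<psi> (a (2*(h-1))) else 0)"

definition A_psi :: "nat \<Rightarrow> ('a::field \<Rightarrow> complex) \<Rightarrow> ((nat \<Rightarrow> 'a) \<Rightarrow> complex) set" where
  "A_psi h \<psi> = {\<chi>. is_character (UL_grp h) \<chi> \<and>
      (\<forall>a. \<chi> (\<lambda>i. if i = h-1 then a else 0) = \<psi> a)}"

definition sharp :: "nat \<Rightarrow> ((nat \<Rightarrow> 'a::field) \<Rightarrow> complex) \<Rightarrow> (nat \<Rightarrow> 'a) \<Rightarrow> complex" where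
  "sharp h \<chi> a = (if a \<in> H'_carrier h
      then \<chi> (\<lambda>i. if 1 \<le> i \<and> i \<le> h-1 then a (2*i) else 0) else 0)"

text \<open>Character of the induced representation Ind_H^G f (Frobenius formula).\<close>
definition ind_char :: "('g, 'm) monoid_scheme \<Rightarrow> 'g set \<Rightarrow> ('g \<Rightarrow> complex) \<Rightarrow> 'g \<Rightarrow> complex" where
  "ind_char G H f g = (1 / of_nat (card H)) *
     (\<Sum>x\<in>carrier G. if x \<otimes>\<^bsub>G\<^esub> g \<otimes>\<^bsub>G\<^esub> inv\<^bsub>G\<^esub> x \<in> H
                      then f (x \<otimes>\<^bsub>G\<^esub> g \<otimes>\<^bsub>G\<^esub> inv\<^bsub>G\<^esub> x) else 0)"

end

theory Submission
  imports Defs "HOL-Number_Theory.Residues"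
begin


definition tm :: "nat \<Rightarrow> (nat \<Rightarrow> 'a::field \<Rightarrow> 'a) \<Rightarrow> (nat \<Rightarrow> 'a) \<Rightarrow> (nat \<Rightarrow> 'a) \<Rightarrow> (nat \<Rightarrow> 'a)" where
  "tm N f a b = (\<lambda>k. if 1 \<le> k \<and> k \<le> N then a k + b k + (\<Sum>i\<in>{1..<k}. a i * f i (b (k-i))) else 0)"

definition extd :: "(nat \<Rightarrow> 'a::field) \<Rightarrow> nat \<Rightarrow> 'a" where
  "extd a k = (if k = 0 then 1 else a k)"

definition cv :: "(nat \<Rightarrow> 'a::field \<Rightarrow> 'a) \<Rightarrow> (nat \<Rightarrow> 'a) \<Rightarrow> (nat \<Rightarrow> 'a) \<Rightarrow> nat \<Rightarrow> 'a" where
  "cv f A B k = (\<Sum>i\<le>k. A i * f i (B (k-i)))"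

locale twist =
  fixes f :: "nat \<Rightarrow> 'a::field \<Rightarrow> 'a"
  assumes f_add: "f i (x + y) = f i x + f i y"
    and f_mult: "f i (x * y) = f i x * f i y"
    and f_one: "f i 1 = 1"
    and f_comp: "f i (f j x) = f (i+j) x"
    and f_0: "f 0 x = x"
begin

lemma f_zero: "f i 0 = 0"
proof -
  have "f i 0 + f i 0 = f i 0 + 0" using f_add[of i 0 0] by simp
  then show ?thesis by (metis add_left_cancel)
qed

lemma f_sum: "f i (sum g S) = (\<Sum>x\<in>S. f i (g x))"
  by (induction S rule: infinite_finite_induct) (auto simp: f_zero f_add)

lemma assoc_lemma:
  fixes k :: nat
    and F :: "nat \<Rightarrow> nat \<Rightarrow> nat \<Rightarrow> 'b::comm_monoid_add"
  shows "(\<Sum>j=0..k. \<Sum>i=0..j. F i (j - i) (n - j)) =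
         (\<Sum>j=0..k. \<Sum>i=0..k - j. F j i (n - j - i))"
  by (induct k) (simp_all add: Suc_diff_le sum.distrib add.assoc)

lemma cv_assoc: "cv f (cv f A B) D k = cv f A (cv f B D) k"
proof -
  have "(\<Sum>j=0..k. \<Sum>i=0..j. (\<lambda>i m r. A i * f i (B m) * f (i+m) (D r)) i (j - i) (k - j)) =
         (\<Sum>j=0..k. \<Sum>i=0..k - j. (\<lambda>i m r. A i * f i (B m) * f (i+m) (D r)) j i (k - j - i))"
    by (rule assoc_lemma)
  then show ?thesis
    unfolding cv_def by (simp add: atLeast0AtMost sum_distrib_left sum_distrib_right f_sum f_mult f_comp mult.assoc)
qed

lemma tm_cv: "k \<le> N \<Longrightarrow> extd (tm N f a b) k = cv f (extd a) (extd b) k"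
proof (cases "k = 0")
  case True then show ?thesis by (simp add: extd_def cv_def f_0)
next
  case False
  assume kN: "k \<le> N"
  have "{..k} = insert 0 (insert k {1..<k})" using False by auto
  then have "cv f (extd a) (extd b) k = b k + (a k + (\<Sum>i\<in>{1..<k}. a i * f i (b (k-i))))"
    using False unfolding cv_def
    by (simp add: extd_def f_0 f_one)
  then show ?thesis using False kN by (simp add: extd_def tm_def)
qed

lemma tm_assoc: "tm N f (tm N f a b) c = tm N f a (tm N f b c)"
proof
  fix k
  show "tm N f (tm N f a b) c k = tm N f a (tm N f b c) k"
  proof (cases "1 \<le> k \<and> k \<le> N")
    case True
    have "tm N f (tm N f a b) c k = extd (tm N f (tm N f a b) c) k" using True by (simp add: extd_def)
    also have "\<dots> = cv f (extd (tm N f a b)) (extd c) k" using True by (simp add: tm_cv)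
    also have "\<dots> = cv f (cv f (extd a) (extd b)) (extd c) k"
    proof -
      have "\<And>i. i \<in> {..k} \<Longrightarrow> extd (tm N f a b) i = cv f (extd a) (extd b) i" using True by (simp add: tm_cv)
      then show ?thesis unfolding cv_def[of f _ "extd c"] by (intro sum.cong refl) simp
    qed
    also have "\<dots> = cv f (extd a) (cv f (extd b) (extd c)) k" by (rule cv_assoc)
    also have "\<dots> = cv f (extd a) (extd (tm N f b c)) k"
    proof -
      have "\<And>i. i \<in> {..k} \<Longrightarrow> extd (tm N f b c) (k-i) = cv f (extd b) (extd c) (k-i)" using True by (intro tm_cv) auto
      then show ?thesis unfolding cv_def[of f "extd a"] by (intro sum.cong refl) simp
    qed
    also have "\<dots> = extd (tm N f a (tm N f b c)) k" using True by (simp add: tm_cv)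
    also have "\<dots> = tm N f a (tm N f b c) k" using True by (simp add: extd_def)
    finally show ?thesis .
  next
    case False
    then show ?thesis unfolding tm_def by (simp only: if_False)
  qed
qed

end


lemma char_p:
  fixes p :: nat
  assumes "prime p" "card (UNIV::'a::{field,finite} set) = p^n"
  shows "of_nat p = (0::'a)"
proof -
  have pos: "CHAR('a) > 0" by (rule finite_imp_CHAR_pos) simp
  have pr: "prime CHAR('a)" using prime_CHAR_semidom[OF pos] .
  have "CHAR('a) dvd p^n" using CHAR_dvd_CARD[where 'a='a] assms(2) by simp
  then have "CHAR('a) dvd p" using pr prime_dvd_power by blast
  then have "CHAR('a) = p" using pr assms(1) primes_dvd_imp_eq by blast
  then show ?thesis by (metis of_nat_CHAR)
qed

lemma frob_p:
  fixes x y :: "'a::comm_ring_1"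
  assumes "prime p" "of_nat p = (0::'a)"
  shows "(x+y)^p = x^p + y^p"
proof -
  have p0: "p \<noteq> 0" using assms(1) by auto
  have z: "of_nat (p choose k) * x^k * y^(p-k) = 0" if "k \<in> {..p} - {0,p}" for k
  proof -
    have "p dvd (p choose k)" using that p0 assms(1) by (intro dvd_choose_prime) auto
    then obtain c where "p choose k = p * c" by blast
    then show ?thesis using assms(2) by simp
  qed
  have "(x+y)^p = (\<Sum>k\<le>p. of_nat (p choose k) * x^k * y^(p-k))" by (rule binomial_ring)
  also have "\<dots> = (\<Sum>k\<in>{0,p}. of_nat (p choose k) * x^k * y^(p-k))"
    by (rule sum.mono_neutral_right) (use z in auto)
  also have "\<dots> = x^p + y^p" using p0 by (simp add: add.commute)
  finally show ?thesis .
qed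

lemma frob_pow:
  fixes x y :: "'a::comm_ring_1"
  assumes "prime p" "of_nat p = (0::'a)"
  shows "(x+y)^(p^m) = x^(p^m) + y^(p^m)"
proof (induction m)
  case (Suc m)
  have e: "\<And>z::'a. z^(p^Suc m) = (z^(p^m))^p" by (simp add: power_mult[symmetric] mult.commute)
  have "(x+y)^(p^Suc m) = ((x+y)^(p^m))^p" by (rule e)
  also have "\<dots> = x^(p^Suc m) + y^(p^Suc m)" using Suc frob_p[OF assms] e by simp
  finally show ?case .
qed simp

lemma pow_card_same:
  fixes x :: "'a :: {field,finite}"
  shows   "x ^ card (UNIV :: 'a set) = x"
proof (cases "x = 0")
  case False
  have "x * (\<Prod>y\<in>UNIV-{0}. x * y) = x * x ^ (card (UNIV :: 'a set) - 1) * \<Prod>(UNIV-{0})"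
    by (simp add: prod.distrib mult_ac)
  also have "x * x ^ (card (UNIV :: 'a set) - 1) = x ^ Suc (card (UNIV :: 'a set) - 1)"
    by (subst power_Suc) auto
  also have "Suc (card (UNIV :: 'a set) - 1) = card (UNIV :: 'a set)"
    using finite_UNIV_card_ge_0[where ?'a = 'a] by simp
  also have "(\<Prod>y\<in>UNIV-{0}. x * y) = (\<Prod>y\<in>UNIV-{0}. y)"
    by (rule prod.reindex_bij_witness[of _ "\<lambda>y. y / x" "\<lambda>y. x * y"]) (use False in auto)
  finally show ?thesis
    by simp
qed (use finite_UNIV_card_ge_0[where ?'a = 'a] in auto)

lemma pow_card_pow_same:
  fixes x :: "'a :: {field,finite}"
  shows "x ^ (card (UNIV :: 'a set) ^ n) = x"
  by (induction n) (simp_all add: pow_card_same power_mult)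

lemma twist_frob:
  assumes "prime p" "of_nat p = (0::'a::field)" "q = p^r"
  shows "twist (\<lambda>i (x::'a). x^(q^i))"
proof
  fix i j and x y :: 'a
  show "(x + y) ^ q ^ i = x ^ q ^ i + y ^ q ^ i"
    using frob_pow[OF assms(1,2), of x y "r*i"] assms(3) by (simp add: power_mult)
  show "(x * y) ^ q ^ i = x ^ q ^ i * y ^ q ^ i" by (simp add: power_mult_distrib)
  show "(1::'a) ^ q ^ i = 1" by simp
  have "(x ^ q ^ j) ^ q ^ i = x^(q^j * q^i)" by (rule power_mult[symmetric])
  then show "(x ^ q ^ j) ^ q ^ i = x ^ q ^ (i + j)" by (simp add: power_add mult.commute)
  show "x ^ q ^ 0 = x" by simp
qed

lemma twist_id: "twist (\<lambda>i (x::'a::field). x)"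
  by standard auto

lemma not_Suc0_le[simp]: "\<not> Suc 0 \<le> k \<longleftrightarrow> k = 0" by auto

definition cN :: "nat \<Rightarrow> (nat \<Rightarrow> 'a::field) set" where
  "cN N = {a. \<forall>i. (i = 0 \<or> N < i) \<longrightarrow> a i = 0}"

lemma finite_cN: "finite (cN N :: (nat \<Rightarrow> 'a::{field,finite}) set)"
proof -
  have "cN N = {a::nat\<Rightarrow>'a. \<forall>x. (x \<in> {1..N} \<longrightarrow> a x \<in> UNIV) \<and> (x \<notin> {1..N} \<longrightarrow> a x = 0)}"
    unfolding cN_def by auto
  moreover have "finite {a::nat\<Rightarrow>'a. \<forall>x. (x \<in> {1..N} \<longrightarrow> a x \<in> UNIV) \<and> (x \<notin> {1..N} \<longrightarrow> a x = 0)}"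
    by (rule finite_set_of_finite_funs) auto
  ultimately show ?thesis by simp
qed

context twist
begin

lemma tm_cN: "tm N f a b \<in> cN N" unfolding tm_def cN_def by auto

lemma tm_one_left: "a \<in> cN N \<Longrightarrow> tm N f (\<lambda>_. 0) a = a"
  unfolding tm_def cN_def by (auto simp: fun_eq_iff)

lemma tm_one_right: "a \<in> cN N \<Longrightarrow> tm N f a (\<lambda>_. 0) = a"
  unfolding tm_def cN_def by (auto simp: fun_eq_iff f_zero)

lemma tm_inj_left:
  assumes "y \<in> cN N" "y' \<in> cN N" "tm N f y x = tm N f y' x"
  shows "y = y'"
proof
  fix k show "y k = y' k"
  proof (induction k rule: less_induct)
    case (less k)
    show ?case
    proof (cases "1 \<le> k \<and> k \<le> N")
      case True
      have "tm N f y x k = tm N f y' x k" using assms(3) by simp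
      moreover have "(\<Sum>i\<in>{1..<k}. y i * f i (x (k-i))) = (\<Sum>i\<in>{1..<k}. y' i * f i (x (k-i)))"
        using less by (intro sum.cong) auto
      ultimately show ?thesis using True unfolding tm_def by simp
    next
      case False
      then show ?thesis using assms(1,2) unfolding cN_def by auto
    qed
  qed
qed

lemma tm_group:
  assumes "X \<subseteq> cN N" "finite X" "(\<lambda>_. 0) \<in> X" "\<And>a b. a \<in> X \<Longrightarrow> b \<in> X \<Longrightarrow> tm N f a b \<in> X"
  shows "group \<lparr>carrier = X, monoid.mult = tm N f, one = (\<lambda>_. 0)\<rparr>"
proof (rule groupI, simp_all)
  fix a b c assume "a \<in> X" "b \<in> X" "c \<in> X"
  show "tm N f a b \<in> X" by (rule assms(4)) fact+
  show "tm N f (tm N f a b) c = tm N f a (tm N f b c)" by (rule tm_assoc)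
next
  show "(\<lambda>_. 0) \<in> X" by fact
next
  fix a assume "a \<in> X" then show "tm N f (\<lambda>_. 0) a = a" using assms(1) tm_one_left by auto
next
  fix x assume x: "x \<in> X"
  have inj: "inj_on (\<lambda>y. tm N f y x) X"
    using assms(1) tm_inj_left unfolding inj_on_def by (meson subsetD)
  have sub: "(\<lambda>y. tm N f y x) ` X \<subseteq> X" using assms(4) x by auto
  have "(\<lambda>y. tm N f y x) ` X = X"
    by (rule endo_inj_surj[OF assms(2) sub inj])
  then have "(\<lambda>_. 0) \<in> (\<lambda>y. tm N f y x) ` X" using assms(3) by simp
  then show "\<exists>y\<in>X. tm N f y x = (\<lambda>_. 0)" by force
qed

end

lemma tm_comm: "tm N (\<lambda>i x. x) a b = tm N (\<lambda>i x. x) b a"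
proof
  fix k
  have "(\<Sum>i\<in>{1..<k}. a i * b (k-i)) = (\<Sum>i\<in>{1..<k}. b i * a (k-i))"
    by (rule sum.reindex_bij_witness[of _ "\<lambda>i. k - i" "\<lambda>i. k - i"]) (auto simp: mult.commute)
  then show "tm N (\<lambda>i x. x) a b k = tm N (\<lambda>i x. x) b a k" unfolding tm_def by (simp add: add.commute)
qed



definition extn :: "('g,'m) monoid_scheme \<Rightarrow> 'g set \<Rightarrow> ('g \<Rightarrow> complex) \<Rightarrow> ('g \<Rightarrow> complex) set" where
  "extn G S \<phi> = {\<chi>. is_character G \<chi> \<and> (\<forall>s\<in>S. \<chi> s = \<phi> s)}"

lemma is_character_upd:
  "is_character (G\<lparr>carrier := T\<rparr>) \<chi> \<longleftrightarrow> (\<forall>x\<in>T. \<chi> x \<noteq> 0)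
     \<and> (\<forall>x\<in>T. \<forall>y\<in>T. \<chi> (x \<otimes>\<^bsub>G\<^esub> y) = \<chi> x * \<chi> y) \<and> (\<forall>x. x \<notin> T \<longrightarrow> \<chi> x = 0)"
  unfolding is_character_def by simp

context group
begin

lemma char_one: "is_character G \<chi> \<Longrightarrow> \<chi> \<one> = 1"
proof -
  assume c: "is_character G \<chi>"
  then have "\<chi> \<one> = \<chi> \<one> * \<chi> \<one>" "\<chi> \<one> \<noteq> 0" unfolding is_character_def
    by (metis one_closed l_one)+
  then show ?thesis by simp
qed

lemma char_pow: "is_character G \<chi> \<Longrightarrow> x \<in> carrier G \<Longrightarrow> \<chi> (x [^] (n::nat)) = \<chi> x ^ n"
proof (induction n)
  case 0 then show ?case by (simp add: char_one)
next
  case (Suc n)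
  then show ?case unfolding is_character_def by (simp add: nat_pow_Suc)
qed

lemma char_upd_pow:
  assumes "is_character (G\<lparr>carrier := T\<rparr>) \<chi>" "subgroup T G" "x \<in> T"
  shows "\<chi> (x [^] (n::nat)) = \<chi> x ^ n"
proof -
  interpret T: group "G\<lparr>carrier := T\<rparr>" using assms(2) by (rule subgroup.subgroup_is_group) (rule is_group)
  have "\<chi> (x [^]\<^bsub>G\<lparr>carrier := T\<rparr>\<^esub> n) = \<chi> x ^ n" using assms by (intro T.char_pow) auto
  then show ?thesis using nat_pow_consistent[of x n T] by simp
qed

lemma finite_subgroupI:
  assumes "finite H" "H \<subseteq> carrier G" "H \<noteq> {}" "\<And>a b. a \<in> H \<Longrightarrow> b \<in> H \<Longrightarrow> a \<otimes> b \<in> H"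
  shows "subgroup H G"
proof (rule subgroupI[OF assms(2,3) _ assms(4)])
  fix a assume a: "a \<in> H"
  have aG: "a \<in> carrier G" using a assms(2) by auto
  have inj: "inj_on (\<lambda>x. a \<otimes> x) H" unfolding inj_on_def using assms(2) aG by (metis Units_eq Units_l_cancel subsetD)
  have "(\<lambda>x. a \<otimes> x) ` H = H" by (rule endo_inj_surj[OF assms(1) _ inj]) (use a assms(4) in auto)
  then obtain x where x: "x \<in> H" "a \<otimes> x = a" using a by (metis imageE)
  then have "x = \<one>" using aG assms(2) by (metis l_cancel_one' subsetD)
  then have "\<one> \<in> H" using x by simp
  then obtain y where y: "y \<in> H" "a \<otimes> y = \<one>" using \<open>_ ` H = H\<close> by (metis imageE)
  then have "y = inv a" using aG assms(2) by (metis inv_comm inv_equality subsetD)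
  then show "inv a \<in> H" using y by simp
qed

end

lemma (in comm_group) pow_S_exists:
  assumes "finite (carrier G)" "g \<in> carrier G"
  shows "\<exists>k>0. g [^] (k::nat) = \<one>"
proof -
  let ?P = "{g [^] (k::nat) | k. True}"
  have "?P \<subseteq> carrier G" using assms by auto
  moreover have "subgroup ?P G"
  proof (rule finite_subgroupI)
    show "finite ?P" using assms(1) \<open>?P \<subseteq> carrier G\<close> finite_subset by blast
  next
    fix a b assume "a \<in> ?P" "b \<in> ?P" then show "a \<otimes> b \<in> ?P" using assms(2) by (auto simp: nat_pow_mult)
  qed (use assms in auto)
  moreover have "g \<in> ?P"
  proof -
    have "g [^] (1::nat) = g" using assms(2) by simp
    then show ?thesis by (metis (mono_tags, lifting) mem_Collect_eq)
  qed
  ultimately have "inv g \<in> ?P" by (meson subgroup.m_inv_closed)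
  then obtain k where "inv g = g [^] (k::nat)" by auto
  then have "g [^] (Suc k) = \<one>" using assms(2) by (metis l_inv nat_pow_Suc)
  then show ?thesis by blast
qed



locale step_ctx = comm_group G for G (structure) +
  fixes S g
  assumes fin: "finite (carrier G)" and S: "subgroup S G" and g: "g \<in> carrier G" and gS: "g \<notin> S"
begin

definition mm :: nat where "mm = (LEAST m. 0 < m \<and> g [^] m \<in> S)"

definition TT where "TT = {s \<otimes> g [^] k | s k. s \<in> S \<and> k < mm}"

lemma S_sub: "S \<subseteq> carrier G" using S subgroup.subset by blast

lemma ex_m: "\<exists>m::nat. 0 < m \<and> g [^] m \<in> S"
proof -
  obtain k where "k > 0" "g [^] (k::nat) = \<one>" using pow_S_exists[OF fin g] by blast
  moreover have "\<one> \<in> S" using S by (rule subgroup.one_closed)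
  ultimately show ?thesis by metis
qed

lemma mm_pos: "0 < mm" and mm_S: "g [^] mm \<in> S"
  using LeastI_ex[OF ex_m] unfolding mm_def by auto

lemma mm_min: "0 < k \<Longrightarrow> k < mm \<Longrightarrow> g [^] k \<notin> S"
  using not_less_Least unfolding mm_def by blast

lemma mm_ge2: "2 \<le> mm"
proof -
  have "g [^] (1::nat) = g" using g by simp
  then have "mm \<noteq> 1" using mm_S gS by metis
  then show ?thesis using mm_pos by linarith
qed

lemma rep_unique_aux:
  assumes "s \<in> S" "s' \<in> S" "k < mm" "k' < mm" "k \<le> k'" "s \<otimes> g [^] k = s' \<otimes> g [^] k'"
  shows "s = s' \<and> k = k'"
proof -
  define d where "d = k' - k"
  have sG: "s \<in> carrier G" and s'G: "s' \<in> carrier G" using assms S_sub by auto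
  have "g [^] k' = g [^] k \<otimes> g [^] d" using assms(5) g unfolding d_def by (simp add: nat_pow_mult)
  then have "s \<otimes> g [^] k = (s' \<otimes> g [^] d) \<otimes> g [^] k" using assms(6) g s'G by (simp add: m_ac)
  then have e: "s = s' \<otimes> g [^] d" using g sG s'G by (metis right_cancel m_closed nat_pow_closed)
  then have "g [^] d = inv s' \<otimes> s" using g s'G by (simp add: m_assoc[symmetric])
  then have "g [^] d \<in> S" using S assms(1,2) by (simp add: subgroup.m_closed subgroup.m_inv_closed)
  then have "d = 0" using mm_min[of d] assms unfolding d_def by linarith
  then show ?thesis using e s'G assms(5) unfolding d_def by simp
qed

lemma rep_unique:
  assumes "s \<in> S" "s' \<in> S" "k < mm" "k' < mm" "s \<otimes> g [^] k = s' \<otimes> g [^] k'"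
  shows "s = s' \<and> k = k'"
proof (cases "k \<le> k'")
  case True then show ?thesis using rep_unique_aux assms by blast
next
  case False then show ?thesis using rep_unique_aux[of s' s k' k] assms by auto
qed

lemma TT_sub: "TT \<subseteq> carrier G" unfolding TT_def using S_sub g by auto

lemma S_TT: "S \<subseteq> TT"
proof
  fix s assume "s \<in> S"
  then have "s = s \<otimes> g [^] (0::nat)" "0 < mm" using S_sub mm_pos by auto
  then show "s \<in> TT" unfolding TT_def using \<open>s \<in> S\<close> by blast
qed

lemma g_TT: "g \<in> TT"
proof -
  have "g = \<one> \<otimes> g [^] (1::nat)" using g by simp
  moreover have "\<one> \<in> S" using S subgroup.one_closed by blast
  moreover have "1 < mm" using mm_ge2 by simp
  ultimately show ?thesis unfolding TT_def by blast
qed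

lemma TT_mult_rep:
  assumes "s \<in> S" "s' \<in> S" "k < mm" "k' < mm"
  shows "(s \<otimes> g [^] k) \<otimes> (s' \<otimes> g [^] k') =
    (if k + k' < mm then (s \<otimes> s') \<otimes> g [^] (k + k') else (s \<otimes> s' \<otimes> g [^] mm) \<otimes> g [^] (k + k' - mm))"
proof -
  have sG: "s \<in> carrier G" and s'G: "s' \<in> carrier G" using assms S_sub by auto
  have e1: "(s \<otimes> g [^] k) \<otimes> (s' \<otimes> g [^] k') = (s \<otimes> s') \<otimes> g [^] (k + k')"
    using sG s'G g by (simp add: m_ac nat_pow_mult[symmetric])
  show ?thesis
  proof (cases "k + k' < mm")
    case False
    then have "g [^] (k + k') = g [^] mm \<otimes> g [^] (k + k' - mm)" using g by (simp add: nat_pow_mult)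
    then show ?thesis using e1 False sG s'G g by (simp add: m_ac)
  qed (use e1 in simp)
qed

lemma TT_mult: "a \<in> TT \<Longrightarrow> b \<in> TT \<Longrightarrow> a \<otimes> b \<in> TT"
proof -
  assume "a \<in> TT" "b \<in> TT"
  then obtain s k s' k' where a: "a = s \<otimes> g [^] k" "s \<in> S" "k < mm" and b: "b = s' \<otimes> g [^] k'" "s' \<in> S" "k' < mm"
    unfolding TT_def by blast
  have ss: "s \<otimes> s' \<in> S" "s \<otimes> s' \<otimes> g [^] mm \<in> S" using a b mm_S S by (auto intro: subgroup.m_closed)
  show "a \<otimes> b \<in> TT"
  proof (cases "k + k' < mm")
    case True then show ?thesis using TT_mult_rep[OF a(2) b(2) a(3) b(3)] a b ss unfolding TT_def by auto
  next
    case False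
    then have "k + k' - mm < mm" using a b by linarith
    then show ?thesis using TT_mult_rep[OF a(2) b(2) a(3) b(3)] a b ss False unfolding TT_def by auto
  qed
qed

lemma TT_subgroup: "subgroup TT G"
  by (rule finite_subgroupI) (use TT_sub fin finite_subset g_TT TT_mult in auto)

lemma finite_S: "finite S" using S_sub fin finite_subset by blast

lemma card_TT: "card TT = mm * card S"
proof -
  have "TT = (\<lambda>(s,k). s \<otimes> g [^] k) ` (S \<times> {..<mm})" unfolding TT_def by auto
  moreover have "inj_on (\<lambda>(s,k). s \<otimes> g [^] k) (S \<times> {..<mm})"
    unfolding inj_on_def using rep_unique by auto
  ultimately have "card TT = card (S \<times> {..<mm})" by (simp add: card_image)
  then show ?thesis by (simp add: card_cartesian_product)
qed

context
  fixes \<phi> assumes phi: "is_character (G\<lparr>carrier := S\<rparr>) \<phi>"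
begin

lemma phi_mult: "x \<in> S \<Longrightarrow> y \<in> S \<Longrightarrow> \<phi> (x \<otimes> y) = \<phi> x * \<phi> y"
  using phi unfolding is_character_upd by blast

lemma phi_nz: "x \<in> S \<Longrightarrow> \<phi> x \<noteq> 0"
  using phi unfolding is_character_upd by blast

definition chi :: "complex \<Rightarrow> 'a \<Rightarrow> complex" where
  "chi z t = (if t \<in> TT then (THE c. \<exists>s k. s \<in> S \<and> k < mm \<and> t = s \<otimes> g [^] k \<and> c = \<phi> s * z ^ k) else 0)"

lemma chi_eq: "s \<in> S \<Longrightarrow> k < mm \<Longrightarrow> chi z (s \<otimes> g [^] k) = \<phi> s * z ^ k"
proof -
  assume a: "s \<in> S" "k < mm"
  then have "s \<otimes> g [^] k \<in> TT" unfolding TT_def by blast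
  moreover have "(THE c. \<exists>s' k'. s' \<in> S \<and> k' < mm \<and> s \<otimes> g [^] k = s' \<otimes> g [^] k' \<and> c = \<phi> s' * z ^ k') = \<phi> s * z ^ k"
    by (rule the_equality) (use a rep_unique in blast)+
  ultimately show ?thesis unfolding chi_def by simp
qed

lemma chi_char:
  assumes z: "z ^ mm = \<phi> (g [^] mm)"
  shows "chi z \<in> extn (G\<lparr>carrier := TT\<rparr>) S \<phi>"
proof -
  have z0: "z \<noteq> 0" using z phi_nz[OF mm_S] mm_pos by (metis zero_power)
  have nz: "chi z t \<noteq> 0" if "t \<in> TT" for t
  proof -
    obtain s k where "t = s \<otimes> g [^] k" "s \<in> S" "k < mm" using \<open>t \<in> TT\<close> unfolding TT_def by blast
    then show ?thesis using chi_eq phi_nz z0 by simp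
  qed
  have mult: "chi z (a \<otimes> b) = chi z a * chi z b" if ab: "a \<in> TT" "b \<in> TT" for a b
  proof -
    obtain s k s' k' where a: "a = s \<otimes> g [^] k" "s \<in> S" "k < mm" and b: "b = s' \<otimes> g [^] k'" "s' \<in> S" "k' < mm"
      using ab unfolding TT_def by blast
    have ss: "s \<otimes> s' \<in> S" "s \<otimes> s' \<otimes> g [^] mm \<in> S" using a b mm_S S by (auto intro: subgroup.m_closed)
    show ?thesis
    proof (cases "k + k' < mm")
      case True
      then show ?thesis using TT_mult_rep[OF a(2) b(2) a(3) b(3)] a b ss chi_eq phi_mult
        by (simp add: power_add)
    next
      case False
      then have kk: "k + k' - mm < mm" using a b by linarith
      have "chi z (a \<otimes> b) = \<phi> (s \<otimes> s' \<otimes> g [^] mm) * z ^ (k + k' - mm)"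
        using TT_mult_rep[OF a(2) b(2) a(3) b(3)] a b ss chi_eq kk False by simp
      also have "\<dots> = \<phi> s * \<phi> s' * z ^ mm * z ^ (k + k' - mm)"
        using phi_mult ss a b mm_S z by simp
      also have "\<dots> = \<phi> s * \<phi> s' * z ^ (k + k')"
        using False by (simp add: mult.assoc power_add[symmetric])
      also have "\<dots> = chi z a * chi z b" using a b chi_eq by (simp add: power_add)
      finally show ?thesis .
    qed
  qed
  have ext: "chi z s = \<phi> s" if "s \<in> S" for s
  proof -
    have "s = s \<otimes> g [^] (0::nat)" using that S_sub by auto
    then show ?thesis using chi_eq[OF that mm_pos] by simp
  qed
  show ?thesis unfolding extn_def is_character_upd using nz mult ext by (auto simp: chi_def)
qed

lemma chi_g: "chi z g = z"
proof -
  have e: "\<one> \<otimes> g [^] (1::nat) = g" using g by simp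
  have "\<one> \<in> S" using S subgroup.one_closed by blast
  moreover have "1 < mm" using mm_ge2 by simp
  ultimately have "chi z (\<one> \<otimes> g [^] (1::nat)) = \<phi> \<one> * z ^ 1" by (rule chi_eq)
  then have c: "chi z g = \<phi> \<one> * z" using e by simp
  have "\<phi> \<one> = 1"
  proof -
    interpret SG: group "G\<lparr>carrier := S\<rparr>" using S by (rule subgroup.subgroup_is_group) (rule is_group)
    show ?thesis using SG.char_one[OF phi] by simp
  qed
  then show ?thesis using c by simp
qed

lemma ext_determined:
  assumes "\<chi> \<in> extn (G\<lparr>carrier := TT\<rparr>) S \<phi>" "\<chi>' \<in> extn (G\<lparr>carrier := TT\<rparr>) S \<phi>" "\<chi> g = \<chi>' g"
  shows "\<chi> = \<chi>'"
proof
  fix t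
  show "\<chi> t = \<chi>' t"
  proof (cases "t \<in> TT")
    case True
    then obtain s k where t: "t = s \<otimes> g [^] k" "s \<in> S" "k < mm" unfolding TT_def by blast
    have c: "is_character (G\<lparr>carrier := TT\<rparr>) \<chi>" "is_character (G\<lparr>carrier := TT\<rparr>) \<chi>'"
      using assms unfolding extn_def by auto
    have gk: "g [^] k \<in> TT"
    proof (induction k)
      case 0 then show ?case using TT_subgroup subgroup.one_closed by fastforce
    next
      case (Suc k) then show ?case using TT_mult g_TT by simp
    qed
    have "\<chi> t = \<chi> s * \<chi> g ^ k"
      using c(1) t S_TT gk char_upd_pow[OF c(1) TT_subgroup g_TT] unfolding is_character_upd by auto
    moreover have "\<chi>' t = \<chi>' s * \<chi>' g ^ k"
      using c(2) t S_TT gk char_upd_pow[OF c(2) TT_subgroup g_TT] unfolding is_character_upd by auto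
    ultimately show ?thesis using assms t unfolding extn_def by auto
  next
    case False
    then show ?thesis using assms unfolding extn_def is_character_upd by auto
  qed
qed

lemma ext_bij: "bij_betw (\<lambda>\<chi>. \<chi> g) (extn (G\<lparr>carrier := TT\<rparr>) S \<phi>) {z. z ^ mm = \<phi> (g [^] mm)}"
  unfolding bij_betw_def
proof (intro conjI)
  show "inj_on (\<lambda>\<chi>. \<chi> g) (extn (G\<lparr>carrier := TT\<rparr>) S \<phi>)"
    unfolding inj_on_def using ext_determined by blast
  show "(\<lambda>\<chi>. \<chi> g) ` extn (G\<lparr>carrier := TT\<rparr>) S \<phi> = {z. z ^ mm = \<phi> (g [^] mm)}"
  proof safe
    fix \<chi> assume c: "\<chi> \<in> extn (G\<lparr>carrier := TT\<rparr>) S \<phi>"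
    have "\<chi> (g [^] mm) = \<chi> g ^ mm"
      using c char_upd_pow[OF _ TT_subgroup g_TT] unfolding extn_def by auto
    then show "\<chi> g ^ mm = \<phi> (g [^] mm)" using c mm_S unfolding extn_def by auto
  next
    fix z :: complex assume "z ^ mm = \<phi> (g [^] mm)"
    then show "z \<in> (\<lambda>\<chi>. \<chi> g) ` extn (G\<lparr>carrier := TT\<rparr>) S \<phi>"
      using chi_char chi_g by (metis image_eqI)
  qed
qed

lemma card_ext_step: "finite (extn (G\<lparr>carrier := TT\<rparr>) S \<phi>) \<and> card (extn (G\<lparr>carrier := TT\<rparr>) S \<phi>) = mm"
proof -
  have "\<phi> (g [^] mm) \<noteq> 0" using phi_nz mm_S by blast
  then have "finite {z. z ^ mm = \<phi> (g [^] mm)}" "card {z. z ^ mm = \<phi> (g [^] mm)} = mm"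
    using mm_pos card_nth_roots by auto
  then show ?thesis using ext_bij bij_betw_finite bij_betw_same_card by metis
qed

end
end



context comm_group
begin

lemma count_ext:
  assumes fin: "finite (carrier G)"
  shows "subgroup S G \<Longrightarrow> is_character (G\<lparr>carrier := S\<rparr>) \<phi> \<Longrightarrow>
    finite (extn G S \<phi>) \<and> card (extn G S \<phi>) * card S = card (carrier G)"
proof (induction "card (carrier G) - card S" arbitrary: S \<phi> rule: less_induct)
  case less
  have Ssub: "S \<subseteq> carrier G" using less.prems(1) subgroup.subset by blast
  show ?case
  proof (cases "S = carrier G")
    case True
    have "extn G S \<phi> = {\<phi>}"
    proof safe
      show "\<phi> \<in> extn G S \<phi>" using less.prems(2) True unfolding extn_def is_character_upd
        by (simp add: is_character_def)
    next
      fix \<chi> assume c: "\<chi> \<in> extn G S \<phi>"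
      show "\<chi> = \<phi>"
      proof
        fix x show "\<chi> x = \<phi> x"
          using c less.prems(2) True unfolding extn_def is_character_upd is_character_def by (cases "x \<in> S") auto
      qed
    qed
    then show ?thesis using True by simp
  next
    case False
    then obtain g where g: "g \<in> carrier G" "g \<notin> S" using Ssub by blast
    interpret st: step_ctx G S g
      by (rule step_ctx.intro[OF comm_group_axioms step_ctx_axioms.intro]) (use fin less.prems(1) g in auto)
    let ?E1 = "extn (G\<lparr>carrier := st.TT\<rparr>) S \<phi>"
    have E1: "finite ?E1" "card ?E1 = st.mm" using st.card_ext_step[OF less.prems(2)] by auto
    have "\<one> \<in> S" using less.prems(1) by (rule subgroup.one_closed)
    then have cardS: "card S > 0" using st.finite_S card_gt_0_iff by blast
    have "card S < card st.TT" using st.card_TT st.mm_ge2 cardS by simp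
    moreover have "card st.TT \<le> card (carrier G)" using st.TT_sub fin card_mono by blast
    ultimately have lt: "card (carrier G) - card st.TT < card (carrier G) - card S" by linarith
    have IH: "finite (extn G st.TT \<phi>') \<and> card (extn G st.TT \<phi>') * card st.TT = card (carrier G)"
      if "\<phi>' \<in> ?E1" for \<phi>'
      using less.hyps[OF lt st.TT_subgroup] that unfolding extn_def by blast
    have U: "extn G S \<phi> = (\<Union>\<phi>'\<in>?E1. extn G st.TT \<phi>')"
    proof safe
      fix \<chi> assume c: "\<chi> \<in> extn G S \<phi>"
      let ?r = "\<lambda>x. if x \<in> st.TT then \<chi> x else 0"
      have cc: "is_character G \<chi>" "\<forall>s\<in>S. \<chi> s = \<phi> s" using c unfolding extn_def by auto
      have c1: "\<chi> x \<noteq> 0" if "x \<in> carrier G" for x using cc(1) that by (simp add: is_character_def)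
      have c2: "\<chi> (x \<otimes> y) = \<chi> x * \<chi> y" if "x \<in> carrier G" "y \<in> carrier G" for x y
        using cc(1) that by (simp add: is_character_def)
      have "?r \<in> ?E1"
        unfolding extn_def is_character_upd mem_Collect_eq
      proof (intro conjI ballI allI impI)
        fix x assume "x \<in> st.TT" then show "?r x \<noteq> 0" using c1 st.TT_sub by auto
      next
        fix x y assume "x \<in> st.TT" "y \<in> st.TT"
        then show "?r (x \<otimes> y) = ?r x * ?r y" using c2 st.TT_sub st.TT_mult by auto
      next
        fix x :: 'a assume "x \<notin> st.TT" then show "?r x = 0" by simp
      next
        fix s assume "s \<in> S" then show "?r s = \<phi> s" using cc(2) st.S_TT by auto
      qed
      moreover have "\<chi> \<in> extn G st.TT ?r" using c unfolding extn_def by auto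
      ultimately show "\<chi> \<in> (\<Union>\<phi>'\<in>?E1. extn G st.TT \<phi>')" by blast
    next
      fix \<chi> \<phi>' assume "\<phi>' \<in> ?E1" "\<chi> \<in> extn G st.TT \<phi>'"
      then show "\<chi> \<in> extn G S \<phi>" using st.S_TT unfolding extn_def by auto
    qed
    have disj: "extn G st.TT \<phi>1 \<inter> extn G st.TT \<phi>2 = {}" if "\<phi>1 \<in> ?E1" "\<phi>2 \<in> ?E1" "\<phi>1 \<noteq> \<phi>2" for \<phi>1 \<phi>2
    proof (rule ccontr)
      assume "extn G st.TT \<phi>1 \<inter> extn G st.TT \<phi>2 \<noteq> {}"
      then obtain \<chi> where "\<chi> \<in> extn G st.TT \<phi>1" "\<chi> \<in> extn G st.TT \<phi>2" by blast
      then have "\<phi>1 x = \<phi>2 x" for x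
        using that unfolding extn_def is_character_upd by (cases "x \<in> st.TT") auto
      then show False using that by auto
    qed
    have fU: "finite (extn G S \<phi>)" using U E1 IH by simp
    have "card (extn G S \<phi>) = (\<Sum>\<phi>'\<in>?E1. card (extn G st.TT \<phi>'))"
      unfolding U by (rule card_UN_disjoint) (use E1 IH disj in auto)
    then have "card (extn G S \<phi>) * card st.TT = (\<Sum>\<phi>'\<in>?E1. card (extn G st.TT \<phi>') * card st.TT)"
      by (simp add: sum_distrib_right)
    also have "\<dots> = (\<Sum>\<phi>'\<in>?E1. card (carrier G))" using IH by simp
    also have "\<dots> = st.mm * card (carrier G)" using E1 by simp
    finally have "st.mm * (card (extn G S \<phi>) * card S) = st.mm * card (carrier G)"
      using st.card_TT by (simp add: mult_ac)
    then show ?thesis using fU st.mm_pos by simp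
  qed
qed

lemma lambda_exists:
  assumes fin: "finite (carrier G)" and S: "subgroup S G" and u: "u \<in> carrier G" "u \<notin> S"
  shows "\<exists>lam. is_character G lam \<and> (\<forall>s\<in>S. lam s = 1) \<and> lam u \<noteq> 1"
proof -
  interpret st: step_ctx G S u
    by (rule step_ctx.intro[OF comm_group_axioms step_ctx_axioms.intro]) (use fin S u in auto)
  let ?\<phi> = "\<lambda>x. if x \<in> S then 1 else (0::complex)"
  have phi: "is_character (G\<lparr>carrier := S\<rparr>) ?\<phi>"
    unfolding is_character_upd using S by (auto intro: subgroup.m_closed)
  have "card {z::complex. z ^ st.mm = 1} = st.mm" using st.mm_pos card_nth_roots by simp
  moreover have "card {z::complex. z ^ st.mm = 1} \<le> 1" if "{z::complex. z ^ st.mm = 1} \<subseteq> {1}"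
    using card_mono[OF _ that] by simp
  ultimately have "\<not> {z::complex. z ^ st.mm = 1} \<subseteq> {1}" using st.mm_ge2 by linarith
  then obtain z :: complex where z: "z ^ st.mm = 1" "z \<noteq> 1" by blast
  then have "z \<in> {z. z ^ st.mm = ?\<phi> (u [^] st.mm)}" using st.mm_S by simp
  then have "z \<in> (\<lambda>\<chi>. \<chi> u) ` extn (G\<lparr>carrier := st.TT\<rparr>) S ?\<phi>"
    using st.ext_bij[OF phi] unfolding bij_betw_def by simp
  then obtain \<phi>' where \<phi>': "\<phi>' \<in> extn (G\<lparr>carrier := st.TT\<rparr>) S ?\<phi>" "\<phi>' u = z"
    by blast
  have "finite (extn G st.TT \<phi>') \<and> card (extn G st.TT \<phi>') * card st.TT = card (carrier G)"
    using count_ext[OF fin st.TT_subgroup] \<phi>' unfolding extn_def by blast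
  moreover have "card (carrier G) > 0" using fin one_closed card_gt_0_iff by blast
  ultimately have "extn G st.TT \<phi>' \<noteq> {}" by (auto simp del: card_eq_0_iff)
  then obtain lam where l: "lam \<in> extn G st.TT \<phi>'" by blast
  show ?thesis
  proof (intro exI conjI)
    show "is_character G lam" using l unfolding extn_def by blast
    show "\<forall>s\<in>S. lam s = 1" using l \<phi>' st.S_TT unfolding extn_def by auto
    show "lam u \<noteq> 1" using l \<phi>' st.g_TT z unfolding extn_def by auto
  qed
qed

lemma orth:
  assumes fin: "finite (carrier G)" and S: "subgroup S G" and phi: "is_character (G\<lparr>carrier := S\<rparr>) \<phi>"
    and u: "u \<in> carrier G" "u \<notin> S"
  shows "(\<Sum>\<chi>\<in>extn G S \<phi>. \<chi> u) = 0"
proof -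
  obtain lam where l: "is_character G lam" "\<forall>s\<in>S. lam s = 1" "lam u \<noteq> 1"
    using lambda_exists[OF fin S u] by blast
  define A where "A = extn G S \<phi>"
  define M where "M = (\<lambda>\<chi> x. lam x * \<chi> x)"
  have fA: "finite A" using count_ext[OF fin S phi] unfolding A_def by blast
  have MA: "M ` A \<subseteq> A"
  proof
    fix \<psi> assume "\<psi> \<in> M ` A"
    then obtain \<chi> where c: "\<chi> \<in> A" "\<psi> = M \<chi>" by blast
    have cc: "is_character G \<chi>" "\<forall>s\<in>S. \<chi> s = \<phi> s" using c(1) unfolding A_def extn_def by auto
    have "is_character G \<psi>" using cc(1) l(1) unfolding c(2) M_def is_character_def by simp
    moreover have "\<forall>s\<in>S. \<psi> s = \<phi> s" using cc(2) l(2) unfolding c(2) M_def by simp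
    ultimately show "\<psi> \<in> A" unfolding A_def extn_def by simp
  qed
  have inj: "inj_on M A"
  proof (rule inj_onI)
    fix \<chi> \<chi>' assume a: "\<chi> \<in> A" "\<chi>' \<in> A" "M \<chi> = M \<chi>'"
    have c: "is_character G \<chi>" "is_character G \<chi>'" using a(1,2) unfolding A_def extn_def by auto
    show "\<chi> = \<chi>'"
    proof
      fix x show "\<chi> x = \<chi>' x"
      proof (cases "x \<in> carrier G")
        case True
        have "lam x \<noteq> 0" using l(1) True by (simp add: is_character_def)
        moreover have "M \<chi> x = M \<chi>' x" using a(3) by simp
        then have "lam x * \<chi> x = lam x * \<chi>' x" unfolding M_def .
        ultimately show ?thesis by simp
      next
        case False
        have "\<chi> x = 0" using c(1) False by (simp add: is_character_def)
        moreover have "\<chi>' x = 0" using c(2) False by (simp add: is_character_def)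
        ultimately show ?thesis by simp
      qed
    qed
  qed
  have MAA: "M ` A = A" by (rule endo_inj_surj[OF fA MA inj])
  have "(\<Sum>\<chi>\<in>A. \<chi> u) = (\<Sum>\<chi>\<in>M ` A. \<chi> u)" using MAA by simp
  also have "\<dots> = (\<Sum>\<chi>\<in>A. M \<chi> u)" by (rule sum.reindex[OF inj, unfolded comp_def])
  also have "\<dots> = lam u * (\<Sum>\<chi>\<in>A. \<chi> u)" unfolding M_def by (simp add: sum_distrib_left)
  finally have "(1 - lam u) * (\<Sum>\<chi>\<in>A. \<chi> u) = 0" by (simp add: algebra_simps)
  then show ?thesis using l(3) unfolding A_def by simp
qed

end


definition pr :: "nat \<Rightarrow> (nat \<Rightarrow> 'a::field) \<Rightarrow> nat \<Rightarrow> 'a" where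
  "pr h a = (\<lambda>i. if 1 \<le> i \<and> i \<le> h - 1 then a (2*i) else 0)"

definition lift :: "(nat \<Rightarrow> 'a::field) \<Rightarrow> nat \<Rightarrow> 'a" where
  "lift c = (\<lambda>i. if even i then c (i div 2) else 0)"

definition od :: "(nat \<Rightarrow> 'a::field) \<Rightarrow> nat \<Rightarrow> 'a" where
  "od a = (\<lambda>i. if odd i then a i else 0)"

definition Od :: "nat \<Rightarrow> (nat \<Rightarrow> 'a::field) set" where
  "Od h = {n. \<forall>i. (even i \<or> i \<le> h - 1 \<or> 2*(h-1) < i) \<longrightarrow> n i = 0}"

definition Sh :: "nat \<Rightarrow> (nat \<Rightarrow> 'a::field) set" where
  "Sh h = {c \<in> UL_carrier h. \<forall>i. i \<noteq> h - 1 \<longrightarrow> c i = 0}"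

definition psi' :: "nat \<Rightarrow> ('a::field \<Rightarrow> complex) \<Rightarrow> (nat \<Rightarrow> 'a) \<Rightarrow> complex" where
  "psi' h \<psi> c = (if c \<in> Sh h then \<psi> (c (h-1)) else 0)"

lemma U_mult_tm: "U_mult h q = tm (2*(h-1)) (\<lambda>i x. x^(q^i))"
  unfolding U_mult_def tm_def by simp

lemma UL_mult_tm: "1 \<le> h \<Longrightarrow> UL_mult h = tm (h-1) (\<lambda>i x. x)"
  unfolding UL_mult_def tm_def by (intro ext) (auto simp: less_Suc_eq_le)

lemma U_carrier_cN: "U_carrier h = cN (2*(h-1))"
  unfolding U_carrier_def cN_def by simp

lemma UL_carrier_cN: "1 \<le> h \<Longrightarrow> UL_carrier h = cN (h-1)"
  unfolding UL_carrier_def cN_def by (auto simp: less_Suc_eq_le)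

lemma H'_grp_eq: "H'_grp h q = \<lparr>carrier = H'_carrier h, monoid.mult = U_mult h q, one = (\<lambda>_. 0)\<rparr>"
  unfolding H'_grp_def U_grp_def by simp

lemma sharp_eq: "sharp h \<chi> a = (if a \<in> H'_carrier h then \<chi> (pr h a) else 0)"
  unfolding sharp_def pr_def by simp

locale lctx =
  fixes p r q h :: nat and \<psi> :: "'a::{field,finite} \<Rightarrow> complex"
  assumes p: "prime p" and r: "r \<ge> 1" and q: "q = p ^ r" and card: "card (UNIV :: 'a set) = q ^ 2"
    and h3: "h \<ge> 3" and oddh: "odd h" and add: "additive_character \<psi>"
begin

lemma charp: "of_nat p = (0::'a)"
  using char_p[OF p, of "r*2"] card q by (simp add: power_mult)

lemma q_pos: "q > 0" using q p prime_gt_0_nat by simp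

lemma pow_even: "(x::'a) ^ (q ^ (2*l)) = x"
  using pow_card_pow_same[of x l] card by (simp add: power_mult)

lemma zero_pow: "(0::'a) ^ (q ^ i) = 0"
  using q_pos by simp

lemma twU: "twist (\<lambda>i (x::'a). x^(q^i))"
  by (rule twist_frob[OF p charp q])

lemma psi0: "\<psi> 0 = 1"
proof -
  have "\<psi> 0 = \<psi> 0 * \<psi> 0" "\<psi> 0 \<noteq> 0" using add unfolding additive_character_def by (metis add_0)+
  then show ?thesis by simp
qed

lemma H'_sub: "H'_carrier h \<subseteq> U_carrier h" unfolding H'_carrier_def by auto

lemma H'_closed:
  fixes a b :: "nat \<Rightarrow> 'a"
  assumes a: "a \<in> H'_carrier h" and b: "b \<in> H'_carrier h"
  shows "U_mult h q a b \<in> H'_carrier h"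
proof -
  have aU: "a \<in> U_carrier h" and bU: "b \<in> U_carrier h" and
    ao: "\<And>i. odd i \<Longrightarrow> i \<le> h - 1 \<Longrightarrow> a i = 0" and bo: "\<And>i. odd i \<Longrightarrow> i \<le> h - 1 \<Longrightarrow> b i = 0"
    using a b unfolding H'_carrier_def by auto
  have "U_mult h q a b \<in> U_carrier h" unfolding U_carrier_def U_mult_def by auto
  moreover have "U_mult h q a b k = 0" if k: "odd k" "k \<le> h - 1" for k
  proof -
    have "a i * b (k-i) ^ (q^i) = 0" if "i \<in> {1..<k}" for i
    proof (cases "odd i")
      case True then show ?thesis using ao that k by auto
    next
      case False
      then have "odd (k - i)" using k that by auto
      then show ?thesis using bo[of "k-i"] k zero_pow by auto
    qed
    then have "(\<Sum>i\<in>{1..<k}. a i * b (k-i) ^ (q^i)) = 0" by (intro sum.neutral) blast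
    then show ?thesis unfolding U_mult_def using ao bo k by simp
  qed
  ultimately show ?thesis unfolding H'_carrier_def by auto
qed

lemma zero_H': "(\<lambda>_. 0) \<in> H'_carrier h" unfolding H'_carrier_def U_carrier_def by simp

lemma finite_H': "finite (H'_carrier h :: (nat \<Rightarrow> 'a) set)"
  using H'_sub finite_cN[of "2*(h-1)"] U_carrier_cN finite_subset by metis

lemma group_H': "group (H'_grp h q :: (nat \<Rightarrow> 'a) monoid)"
proof -
  have cl: "\<And>a b. a \<in> H'_carrier h \<Longrightarrow> b \<in> H'_carrier h \<Longrightarrow> tm (2*(h-1)) (\<lambda>i (x::'a). x^(q^i)) a b \<in> H'_carrier h"
    using H'_closed unfolding U_mult_tm .
  have sub: "H'_carrier h \<subseteq> (cN (2*(h-1)) :: (nat \<Rightarrow> 'a) set)" using H'_sub U_carrier_cN by metis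
  show ?thesis unfolding H'_grp_eq U_mult_tm
    by (rule twist.tm_group[OF twU sub finite_H' zero_H' cl])
qed

lemma ULc: "UL_carrier h = (cN (h-1) :: (nat \<Rightarrow> 'a) set)" by (rule UL_carrier_cN) (use h3 in simp)
lemma ULm: "UL_mult h = (tm (h-1) (\<lambda>i (x::'a). x))" by (rule UL_mult_tm) (use h3 in simp)

lemma UL_grp_eq: "UL_grp h = \<lparr>carrier = cN (h-1), monoid.mult = tm (h-1) (\<lambda>i (x::'a). x), one = (\<lambda>_. 0)\<rparr>"
  unfolding UL_grp_def ULc ULm by simp

lemma comm_group_UL: "comm_group (UL_grp h :: (nat \<Rightarrow> 'a) monoid)"
proof -
  have g: "group (UL_grp h :: (nat \<Rightarrow> 'a) monoid)" unfolding UL_grp_eq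
  proof (rule twist.tm_group[OF twist_id])
    show "(\<lambda>_. 0) \<in> (cN (h-1) :: (nat \<Rightarrow> 'a) set)" by (simp add: cN_def)
  qed (auto simp: finite_cN twist.tm_cN[OF twist_id])
  show ?thesis by (rule group.group_comm_groupI[OF g]) (simp add: UL_grp_eq tm_comm)
qed

lemma finite_UL: "finite (UL_carrier h :: (nat \<Rightarrow> 'a) set)"
  unfolding ULc by (rule finite_cN)

lemma pr_UL: "pr h a \<in> UL_carrier h"
  unfolding pr_def UL_carrier_def by auto

lemma pr_hom:
  fixes a b :: "nat \<Rightarrow> 'a"
  assumes a: "a \<in> H'_carrier h" and b: "b \<in> H'_carrier h"
  shows "pr h (U_mult h q a b) = UL_mult h (pr h a) (pr h b)"
proof
  fix j
  have aU: "a \<in> U_carrier h" and bU: "b \<in> U_carrier h" and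
    ao: "\<And>i. odd i \<Longrightarrow> i \<le> h - 1 \<Longrightarrow> a i = 0" and bo: "\<And>i. odd i \<Longrightarrow> i \<le> h - 1 \<Longrightarrow> b i = 0"
    using a b unfolding H'_carrier_def by auto
  show "pr h (U_mult h q a b) j = UL_mult h (pr h a) (pr h b) j"
  proof (cases "1 \<le> j \<and> j \<le> h - 1")
    case True
    let ?g = "\<lambda>i. a i * b (2*j - i) ^ (q ^ i)"
    have z: "?g i = 0" if "i \<in> {1..<2*j} - (\<lambda>l. 2*l) ` {1..<j}" for i
    proof -
      have "odd i" using that by (auto elim!: evenE)
      show ?thesis
      proof (cases "i \<le> h - 1")
        case True then show ?thesis using ao \<open>odd i\<close> by simp
      next
        case False
        then have "odd (2*j - i)" "2*j - i \<le> h - 1" using \<open>odd i\<close> that \<open>1 \<le> j \<and> j \<le> h - 1\<close> by auto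
        then show ?thesis using bo zero_pow by simp
      qed
    qed
    have "(\<Sum>i\<in>{1..<2*j}. ?g i) = (\<Sum>i\<in>(\<lambda>l. 2*l) ` {1..<j}. ?g i)"
      by (rule sum.mono_neutral_right) (use z in auto)
    also have "\<dots> = (\<Sum>l\<in>{1..<j}. ?g (2*l))" by (subst sum.reindex) (auto simp: inj_on_def)
    also have "\<dots> = (\<Sum>l\<in>{1..<j}. pr h a l * pr h b (j - l))"
    proof (rule sum.cong[OF refl])
      fix l assume l: "l \<in> {1..<j}"
      have "2*j - 2*l = 2*(j-l)" by simp
      then show "?g (2*l) = pr h a l * pr h b (j - l)"
        using l True pow_even[of "b (2*(j-l))" l] unfolding pr_def by auto
    qed
    finally show ?thesis using True unfolding pr_def U_mult_def UL_mult_def by auto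
  next
    case False
    then show ?thesis unfolding pr_def UL_mult_def by auto
  qed
qed

lemma H0'_iff:
  fixes a :: "nat \<Rightarrow> 'a"
  shows "a \<in> H0'_carrier h \<longleftrightarrow> a \<in> H'_carrier h \<and> pr h a \<in> Sh h"
proof
  assume a: "a \<in> H0'_carrier h"
  then have aU: "a \<in> U_carrier h" and nz: "\<And>i. a i \<noteq> 0 \<Longrightarrow> i = 2*(h-1) \<or> (odd i \<and> h-1 < i)"
    unfolding H0'_carrier_def by auto
  have "a \<in> H'_carrier h" unfolding H'_carrier_def using aU nz by fastforce
  moreover have "pr h a \<in> Sh h" unfolding Sh_def using pr_UL nz unfolding pr_def by fastforce
  ultimately show "a \<in> H'_carrier h \<and> pr h a \<in> Sh h" by simp
next
  assume a: "a \<in> H'_carrier h \<and> pr h a \<in> Sh h"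
  then have aU: "a \<in> U_carrier h" and ao: "\<And>i. odd i \<Longrightarrow> i \<le> h - 1 \<Longrightarrow> a i = 0"
    and ps: "\<And>j. j \<noteq> h - 1 \<Longrightarrow> pr h a j = 0"
    unfolding H'_carrier_def Sh_def by auto
  have "i = 2*(h-1) \<or> (odd i \<and> h-1 < i)" if nz: "a i \<noteq> 0" for i
  proof (cases "odd i")
    case True then show ?thesis using ao nz by force
  next
    case False
    then obtain j where j: "i = 2*j" by (auto elim: evenE)
    have "i \<noteq> 0"
    proof
      assume "i = 0" then show False using aU nz unfolding U_carrier_def by simp
    qed
    moreover have "\<not> 2*(h-1) < i"
    proof
      assume "2*(h-1) < i" then show False using aU nz unfolding U_carrier_def by simp
    qed
    ultimately have "1 \<le> j" "j \<le> h - 1" using j by auto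
    then have "pr h a j = a i" unfolding pr_def j by simp
    then have "j = h - 1" using ps nz by metis
    then show ?thesis using j by simp
  qed
  then show "a \<in> H0'_carrier h" unfolding H0'_carrier_def using aU by auto
qed

lemma psi_tilde_H0':
  fixes a :: "nat \<Rightarrow> 'a"
  assumes "a \<in> H0'_carrier h"
  shows "psi_tilde h \<psi> a = \<psi> (pr h a (h-1))"
  using assms h3 unfolding psi_tilde_def pr_def by simp

lemma decomp:
  fixes a :: "nat \<Rightarrow> 'a"
  assumes "a \<in> H'_carrier h"
  shows "(\<lambda>i. lift (pr h a) i + od a i) = a"
proof
  fix i
  have aU: "a \<in> U_carrier h" using assms unfolding H'_carrier_def by auto
  show "lift (pr h a) i + od a i = a i"
  proof (cases "even i")
    case True
    then obtain j where j: "i = 2*j" by (auto elim: evenE)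
    show ?thesis
    proof (cases "1 \<le> j \<and> j \<le> h - 1")
      case True then show ?thesis unfolding lift_def od_def pr_def j by simp
    next
      case False
      then have "i = 0 \<or> 2*(h-1) < i" using j by auto
      then have "a i = 0" using aU unfolding U_carrier_def by auto
      then show ?thesis using False unfolding lift_def od_def pr_def j by simp
    qed
  next
    case False then show ?thesis unfolding lift_def od_def by simp
  qed
qed

lemma lift_H':
  fixes c :: "nat \<Rightarrow> 'a"
  assumes "c \<in> UL_carrier h" "n \<in> Od h"
  shows "(\<lambda>i. lift c i + n i) \<in> H'_carrier h"
  using assms h3 unfolding H'_carrier_def U_carrier_def UL_carrier_def Od_def lift_def
  by (auto elim!: evenE)

lemma pr_lift:
  fixes c :: "nat \<Rightarrow> 'a"
  assumes "c \<in> UL_carrier h" "n \<in> Od h"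
  shows "pr h (\<lambda>i. lift c i + n i) = c"
proof
  fix j show "pr h (\<lambda>i. lift c i + n i) j = c j"
    using assms unfolding UL_carrier_def Od_def lift_def pr_def by auto
qed

lemma od_lift:
  fixes c :: "nat \<Rightarrow> 'a"
  assumes "n \<in> Od h"
  shows "od (\<lambda>i. lift c i + n i) = n"
proof
  fix j show "od (\<lambda>i. lift c i + n i) j = n j"
    using assms unfolding Od_def lift_def od_def by auto
qed

lemma od_Od:
  fixes a :: "nat \<Rightarrow> 'a"
  assumes "a \<in> H'_carrier h"
  shows "od a \<in> Od h"
  using assms unfolding H'_carrier_def U_carrier_def Od_def od_def by auto

lemma bij_H': "bij_betw (\<lambda>a. (pr h a, od a)) (H'_carrier h :: (nat \<Rightarrow> 'a) set) ((UL_carrier h :: (nat \<Rightarrow> 'a) set) \<times> (Od h :: (nat \<Rightarrow> 'a) set))"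
  by (rule bij_betw_byWitness[where f' = "\<lambda>(c :: nat \<Rightarrow> 'a, n :: nat \<Rightarrow> 'a) i. lift c i + n i"])
     (use decomp pr_lift od_lift pr_UL od_Od lift_H' in auto)

lemma Sh_UL: "Sh h \<subseteq> UL_carrier h" unfolding Sh_def by auto

lemma bij_H0': "bij_betw (\<lambda>a. (pr h a, od a)) (H0'_carrier h :: (nat \<Rightarrow> 'a) set) ((Sh h :: (nat \<Rightarrow> 'a) set) \<times> (Od h :: (nat \<Rightarrow> 'a) set))"
proof (rule bij_betw_subset[OF bij_H'])
  show "(H0'_carrier h :: (nat \<Rightarrow> 'a) set) \<subseteq> H'_carrier h" using H0'_iff by auto
  have "(\<lambda>a. (pr h a, od a)) ` (H0'_carrier h :: (nat \<Rightarrow> 'a) set) \<subseteq> Sh h \<times> Od h"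
    using H0'_iff od_Od by auto
  moreover have "(Sh h :: (nat \<Rightarrow> 'a) set) \<times> (Od h :: (nat \<Rightarrow> 'a) set) \<subseteq> (\<lambda>a. (pr h a, od a)) ` H0'_carrier h"
  proof
    fix x assume "x \<in> (Sh h :: (nat \<Rightarrow> 'a) set) \<times> (Od h :: (nat \<Rightarrow> 'a) set)"
    then obtain c n where cn: "c \<in> Sh h" "(n :: nat \<Rightarrow> 'a) \<in> Od h" "x = (c, n)" by blast
    let ?a = "\<lambda>i. lift c i + n i"
    have "?a \<in> H0'_carrier h" using H0'_iff lift_H' pr_lift cn Sh_UL by auto
    moreover have "x = (pr h ?a, od ?a)" using pr_lift od_lift cn Sh_UL by auto
    ultimately show "x \<in> (\<lambda>a. (pr h a, od a)) ` H0'_carrier h" by blast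
  qed
  ultimately show "(\<lambda>a. (pr h a, od a)) ` (H0'_carrier h :: (nat \<Rightarrow> 'a) set) = Sh h \<times> Od h" by blast
qed

lemma card_H': "card (H'_carrier h :: (nat \<Rightarrow> 'a) set) = card (UL_carrier h :: (nat \<Rightarrow> 'a) set) * card (Od h :: (nat \<Rightarrow> 'a) set)"
  using bij_betw_same_card[OF bij_H'] by (simp add: card_cartesian_product)

lemma card_H0': "card (H0'_carrier h :: (nat \<Rightarrow> 'a) set) = card (Sh h :: (nat \<Rightarrow> 'a) set) * card (Od h :: (nat \<Rightarrow> 'a) set)"
  using bij_betw_same_card[OF bij_H0'] by (simp add: card_cartesian_product)

lemma Sh_mult:
  fixes c d :: "nat \<Rightarrow> 'a"
  assumes "c \<in> Sh h" "d \<in> Sh h"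
  shows "UL_mult h c d \<in> Sh h \<and> UL_mult h c d (h-1) = c (h-1) + d (h-1)"
proof -
  have z: "c i = 0" if "i \<noteq> h - 1" for i using assms that unfolding Sh_def by auto
  have z2: "d i = 0" if "i \<noteq> h - 1" for i using assms that unfolding Sh_def by auto
  have s: "(\<Sum>i\<in>{1..<k}. c i * d (k-i)) = 0" if "k \<le> h - 1" for k
    by (rule sum.neutral) (use z that in auto)
  have "UL_mult h c d \<in> UL_carrier h" unfolding UL_mult_def UL_carrier_def by auto
  moreover have "UL_mult h c d k = 0" if "k \<noteq> h - 1" for k
  proof (cases "1 \<le> k \<and> k < h")
    case True
    then have "k \<le> h - 1" by arith
    then show ?thesis using s[of k] z z2 that True unfolding UL_mult_def by simp
  qed (auto simp: UL_mult_def)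
  moreover have "UL_mult h c d (h-1) = c (h-1) + d (h-1)" using s[of "h-1"] h3 unfolding UL_mult_def by simp
  ultimately show ?thesis unfolding Sh_def by auto
qed

lemma Sh_subgroup: "subgroup (Sh h) (UL_grp h :: (nat \<Rightarrow> 'a) monoid)"
proof -
  interpret UL: comm_group "UL_grp h :: (nat \<Rightarrow> 'a) monoid" by (rule comm_group_UL)
  show ?thesis
  proof (rule UL.finite_subgroupI)
    show "finite (Sh h :: (nat \<Rightarrow> 'a) set)" using finite_UL Sh_UL finite_subset by metis
    show "Sh h \<subseteq> carrier (UL_grp h :: (nat \<Rightarrow> 'a) monoid)" using Sh_UL by (simp add: UL_grp_def)
    have "(\<lambda>_. 0) \<in> (Sh h :: (nat \<Rightarrow> 'a) set)" unfolding Sh_def UL_carrier_def by simp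
    then show "(Sh h :: (nat \<Rightarrow> 'a) set) \<noteq> {}" by blast
    fix a b :: "nat \<Rightarrow> 'a" assume "a \<in> Sh h" "b \<in> Sh h"
    then show "a \<otimes>\<^bsub>UL_grp h\<^esub> b \<in> Sh h" using Sh_mult by (simp add: UL_grp_def)
  qed
qed

lemma psi'_char: "is_character ((UL_grp h :: (nat \<Rightarrow> 'a) monoid)\<lparr>carrier := Sh h\<rparr>) (psi' h \<psi>)"
  unfolding is_character_upd
proof (intro conjI ballI allI impI)
  fix x :: "nat \<Rightarrow> 'a" assume "x \<in> Sh h" then show "psi' h \<psi> x \<noteq> 0"
    using add unfolding psi'_def additive_character_def by simp
next
  fix x y :: "nat \<Rightarrow> 'a" assume "x \<in> Sh h" "y \<in> Sh h"
  then show "psi' h \<psi> (x \<otimes>\<^bsub>UL_grp h\<^esub> y) = psi' h \<psi> x * psi' h \<psi> y"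
    using Sh_mult[of x y] add unfolding psi'_def additive_character_def by (simp add: UL_grp_def)
next
  fix x :: "nat \<Rightarrow> 'a" assume "x \<notin> Sh h" then show "psi' h \<psi> x = 0" unfolding psi'_def by simp
qed

lemma A_eq: "A_psi h \<psi> = extn (UL_grp h :: (nat \<Rightarrow> 'a) monoid) (Sh h) (psi' h \<psi>)"
proof -
  let ?e = "\<lambda>(a::'a) i. if i = h - 1 then a else (0::'a)"
  have eS: "?e a \<in> Sh h" for a unfolding Sh_def UL_carrier_def using h3 by auto
  have Se: "c = ?e (c (h-1))" if "c \<in> Sh h" for c using that unfolding Sh_def by auto
  have pe: "psi' h \<psi> (?e a) = \<psi> a" for a using eS unfolding psi'_def by simp
  show ?thesis unfolding A_psi_def extn_def
  proof (intro Collect_cong conj_cong refl iffI allI ballI)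
    fix \<chi> :: "(nat \<Rightarrow> 'a) \<Rightarrow> complex" and s :: "nat \<Rightarrow> 'a"
    assume "\<forall>a. \<chi> (?e a) = \<psi> a" "s \<in> Sh h"
    then show "\<chi> s = psi' h \<psi> s" using Se pe by metis
  next
    fix \<chi> :: "(nat \<Rightarrow> 'a) \<Rightarrow> complex" and a :: 'a
    assume "\<forall>s\<in>Sh h. \<chi> s = psi' h \<psi> s"
    then show "\<chi> (?e a) = \<psi> a" using eS pe by metis
  qed
qed

lemma carrier_H': "carrier (H'_grp h q) = H'_carrier h" by (simp add: H'_grp_eq)
lemma mult_H': "x \<otimes>\<^bsub>H'_grp h q\<^esub> y = U_mult h q x y" by (simp add: H'_grp_eq)
lemma one_H': "\<one>\<^bsub>H'_grp h q\<^esub> = (\<lambda>_. 0)" by (simp add: H'_grp_eq)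
lemma carrier_UL: "carrier (UL_grp h) = UL_carrier h" by (simp add: UL_grp_def)
lemma mult_UL: "x \<otimes>\<^bsub>UL_grp h\<^esub> y = UL_mult h x y" by (simp add: UL_grp_def)
lemma one_UL: "\<one>\<^bsub>UL_grp h\<^esub> = (\<lambda>_. 0)" by (simp add: UL_grp_def)

lemma pr_zero: "pr h (\<lambda>_. 0) = (\<lambda>_. 0)" unfolding pr_def by auto

lemma pr_inv:
  fixes x :: "nat \<Rightarrow> 'a"
  assumes x: "x \<in> H'_carrier h"
  shows "pr h (inv\<^bsub>H'_grp h q\<^esub> x) = inv\<^bsub>UL_grp h\<^esub> (pr h x)"
proof -
  interpret H: group "H'_grp h q :: (nat \<Rightarrow> 'a) monoid" by (rule group_H')
  interpret UL: comm_group "UL_grp h :: (nat \<Rightarrow> 'a) monoid" by (rule comm_group_UL)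
  have xc: "x \<in> carrier (H'_grp h q)" using x by (simp add: carrier_H')
  have ix: "inv\<^bsub>H'_grp h q\<^esub> x \<in> H'_carrier h" using H.inv_closed[OF xc] by (simp add: carrier_H')
  have e1: "U_mult h q (inv\<^bsub>H'_grp h q\<^esub> x) x = (\<lambda>_. 0)" using H.l_inv[OF xc] by (simp add: mult_H' one_H')
  have "pr h (inv\<^bsub>H'_grp h q\<^esub> x) \<otimes>\<^bsub>UL_grp h\<^esub> pr h x = pr h (U_mult h q (inv\<^bsub>H'_grp h q\<^esub> x) x)"
    using pr_hom[OF ix x] by (simp add: mult_UL)
  also have "\<dots> = \<one>\<^bsub>UL_grp h\<^esub>" unfolding e1 pr_zero one_UL ..
  finally have e2: "pr h (inv\<^bsub>H'_grp h q\<^esub> x) \<otimes>\<^bsub>UL_grp h\<^esub> pr h x = \<one>\<^bsub>UL_grp h\<^esub>" .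
  have c1: "pr h x \<in> carrier (UL_grp h)" "pr h (inv\<^bsub>H'_grp h q\<^esub> x) \<in> carrier (UL_grp h)"
    using pr_UL by (simp_all add: carrier_UL)
  show ?thesis using UL.inv_equality[OF e2 c1] by simp
qed

lemma pr_conj:
  fixes x g :: "nat \<Rightarrow> 'a"
  assumes x: "x \<in> H'_carrier h" and g: "g \<in> H'_carrier h"
  shows "pr h (x \<otimes>\<^bsub>H'_grp h q\<^esub> g \<otimes>\<^bsub>H'_grp h q\<^esub> inv\<^bsub>H'_grp h q\<^esub> x) = pr h g"
proof -
  interpret H: group "H'_grp h q :: (nat \<Rightarrow> 'a) monoid" by (rule group_H')
  interpret UL: comm_group "UL_grp h :: (nat \<Rightarrow> 'a) monoid" by (rule comm_group_UL)
  have xc: "x \<in> carrier (H'_grp h q)" using x by (simp add: carrier_H')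
  have ix: "inv\<^bsub>H'_grp h q\<^esub> x \<in> H'_carrier h" using H.inv_closed[OF xc] by (simp add: carrier_H')
  have xg: "x \<otimes>\<^bsub>H'_grp h q\<^esub> g \<in> H'_carrier h" using H'_closed[OF x g] by (simp add: mult_H')
  have pU: "\<And>y :: nat \<Rightarrow> 'a. pr h y \<in> carrier (UL_grp h)" using pr_UL by (simp add: carrier_UL)
  have "pr h (x \<otimes>\<^bsub>H'_grp h q\<^esub> g \<otimes>\<^bsub>H'_grp h q\<^esub> inv\<^bsub>H'_grp h q\<^esub> x)
      = UL_mult h (UL_mult h (pr h x) (pr h g)) (pr h (inv\<^bsub>H'_grp h q\<^esub> x))"
    unfolding mult_H' using pr_hom[OF xg[unfolded mult_H'] ix] pr_hom[OF x g] by simp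
  also have "\<dots> = (pr h x \<otimes>\<^bsub>UL_grp h\<^esub> pr h g) \<otimes>\<^bsub>UL_grp h\<^esub> inv\<^bsub>UL_grp h\<^esub> (pr h x)"
    unfolding pr_inv[OF x] mult_UL ..
  also have "\<dots> = pr h g \<otimes>\<^bsub>UL_grp h\<^esub> (pr h x \<otimes>\<^bsub>UL_grp h\<^esub> inv\<^bsub>UL_grp h\<^esub> (pr h x))"
  proof -
    have a: "pr h x \<in> carrier (UL_grp h)" and b: "pr h g \<in> carrier (UL_grp h)" using pU by auto
    have c: "inv\<^bsub>UL_grp h\<^esub> (pr h x) \<in> carrier (UL_grp h)" using UL.inv_closed[OF a] .
    show ?thesis using UL.m_comm[OF a b] UL.m_assoc[OF b a c] by simp
  qed
  also have "\<dots> = pr h g" using pU by simp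
  finally show ?thesis .
qed

lemma part2:
  fixes g :: "nat \<Rightarrow> 'a"
  assumes g: "g \<in> H'_carrier h"
  shows "ind_char (H'_grp h q) (H0'_carrier h) (psi_tilde h \<psi>) g = (\<Sum>\<chi>\<in>A_psi h \<psi>. sharp h \<chi> g)"
proof -
  interpret H: group "H'_grp h q :: (nat \<Rightarrow> 'a) monoid" by (rule group_H')
  interpret UL: comm_group "UL_grp h :: (nat \<Rightarrow> 'a) monoid" by (rule comm_group_UL)
  let ?c = "\<lambda>x. x \<otimes>\<^bsub>H'_grp h q\<^esub> g \<otimes>\<^bsub>H'_grp h q\<^esub> inv\<^bsub>H'_grp h q\<^esub> x"
  have cH: "?c x \<in> H'_carrier h" if x: "x \<in> H'_carrier h" for x :: "nat \<Rightarrow> 'a"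
  proof -
    have "?c x \<in> carrier (H'_grp h q)"
      by (intro H.m_closed H.inv_closed) (simp_all add: carrier_H' x g)
    then show ?thesis by (simp add: carrier_H')
  qed
  have mem: "?c x \<in> H0'_carrier h \<longleftrightarrow> g \<in> H0'_carrier h" if x: "x \<in> H'_carrier h" for x :: "nat \<Rightarrow> 'a"
    using H0'_iff[of "?c x"] H0'_iff[of g] cH[OF x] g pr_conj[OF x g] by simp
  have finUL: "finite (carrier (UL_grp h :: (nat \<Rightarrow> 'a) monoid))" by (simp add: carrier_UL finite_UL)
  have finA: "finite (A_psi h \<psi>)" and cardA: "card (A_psi h \<psi>) * card (Sh h :: (nat \<Rightarrow> 'a) set) = card (UL_carrier h :: (nat \<Rightarrow> 'a) set)"
    using UL.count_ext[OF finUL Sh_subgroup psi'_char] unfolding A_eq[symmetric] carrier_UL by auto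
  have rhs: "(\<Sum>\<chi>\<in>A_psi h \<psi>. sharp h \<chi> g) = (\<Sum>\<chi>\<in>A_psi h \<psi>. \<chi> (pr h g))"
    using g by (simp add: sharp_eq)
  show ?thesis
  proof (cases "g \<in> H0'_carrier h")
    case True
    have pS: "pr h g \<in> Sh h" using True H0'_iff by blast
    have "ind_char (H'_grp h q) (H0'_carrier h) (psi_tilde h \<psi>) g
        = (1 / of_nat (card (H0'_carrier h :: (nat \<Rightarrow> 'a) set))) * (\<Sum>x\<in>(H'_carrier h :: (nat \<Rightarrow> 'a) set). \<psi> (pr h g (h-1)))"
    proof -
      have "(\<Sum>x\<in>H'_carrier h. if ?c x \<in> H0'_carrier h then psi_tilde h \<psi> (?c x) else 0)
          = (\<Sum>x\<in>(H'_carrier h :: (nat \<Rightarrow> 'a) set). \<psi> (pr h g (h-1)))"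
      proof (rule sum.cong[OF refl])
        fix x :: "nat \<Rightarrow> 'a" assume x: "x \<in> H'_carrier h"
        then have "?c x \<in> H0'_carrier h" using mem True by blast
        then show "(if ?c x \<in> H0'_carrier h then psi_tilde h \<psi> (?c x) else 0) = \<psi> (pr h g (h-1))"
          using psi_tilde_H0' pr_conj[OF x g] by simp
      qed
      then show ?thesis unfolding ind_char_def carrier_H' by simp
    qed
    also have "\<dots> = of_nat (card (A_psi h \<psi>)) * \<psi> (pr h g (h-1))"
    proof -
      have "card (H'_carrier h :: (nat \<Rightarrow> 'a) set) = card (A_psi h \<psi>) * card (H0'_carrier h :: (nat \<Rightarrow> 'a) set)"
        using card_H' card_H0' cardA by (simp add: mult.assoc)
      moreover have "card (H0'_carrier h :: (nat \<Rightarrow> 'a) set) > 0"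
      proof -
        have "(\<lambda>_. 0) \<in> (H0'_carrier h :: (nat \<Rightarrow> 'a) set)" unfolding H0'_carrier_def U_carrier_def by simp
        moreover have "finite (H0'_carrier h :: (nat \<Rightarrow> 'a) set)"
          using finite_H' H0'_iff finite_subset[of "H0'_carrier h" "H'_carrier h"] by blast
        ultimately show ?thesis using card_gt_0_iff by blast
      qed
      ultimately show ?thesis by simp
    qed
    also have "\<dots> = (\<Sum>\<chi>\<in>A_psi h \<psi>. \<chi> (pr h g))"
    proof -
      have "\<chi> (pr h g) = \<psi> (pr h g (h-1))" if "\<chi> \<in> A_psi h \<psi>" for \<chi>
        using that pS A_eq unfolding extn_def psi'_def by auto
      then have "(\<Sum>\<chi>\<in>A_psi h \<psi>. \<chi> (pr h g)) = (\<Sum>\<chi>\<in>A_psi h \<psi>. \<psi> (pr h g (h-1)))"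
        by (intro sum.cong) auto
      then show ?thesis by simp
    qed
    finally show ?thesis using rhs by simp
  next
    case False
    have pS: "pr h g \<notin> Sh h" using False H0'_iff g by blast
    have "ind_char (H'_grp h q) (H0'_carrier h) (psi_tilde h \<psi>) g = 0"
      unfolding ind_char_def carrier_H' using mem False by simp
    moreover have "(\<Sum>\<chi>\<in>A_psi h \<psi>. \<chi> (pr h g)) = 0"
      using UL.orth[OF finUL Sh_subgroup psi'_char, of "pr h g"] pr_UL pS unfolding A_eq[symmetric] carrier_UL by auto
    ultimately show ?thesis using rhs by simp
  qed
qed

lemma lift_H'0:
  fixes c :: "nat \<Rightarrow> 'a"
  assumes "c \<in> UL_carrier h"
  shows "lift c \<in> H'_carrier h" and "pr h (lift c) = c"
proof -
  have z: "(\<lambda>_. 0) \<in> (Od h :: (nat \<Rightarrow> 'a) set)" unfolding Od_def by simp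
  have e: "(\<lambda>i. lift c i + (\<lambda>_. 0::'a) i) = lift c" by simp
  show "lift c \<in> H'_carrier h" using lift_H'[OF assms z] unfolding e .
  show "pr h (lift c) = c" using pr_lift[OF assms z] unfolding e .
qed

lemma lift_hom:
  fixes c d :: "nat \<Rightarrow> 'a"
  assumes c: "c \<in> UL_carrier h" and d: "d \<in> UL_carrier h"
  shows "lift (UL_mult h c d) = U_mult h q (lift c) (lift d)"
proof -
  let ?P = "U_mult h q (lift c) (lift d)"
  have lc: "lift c \<in> H'_carrier h" "pr h (lift c) = c" using lift_H'0[OF c] by auto
  have ld: "lift d \<in> H'_carrier h" "pr h (lift d) = d" using lift_H'0[OF d] by auto
  have PH: "?P \<in> H'_carrier h" by (rule H'_closed[OF lc(1) ld(1)])
  have prP: "pr h ?P = UL_mult h c d" using pr_hom[OF lc(1) ld(1)] lc(2) ld(2) by simp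
  have odP: "od ?P = (\<lambda>_. 0)"
  proof
    fix k
    show "od ?P k = 0"
    proof (cases "odd k")
      case True
      have "lift c i * lift d (k - i) ^ (q ^ i) = 0" if "i \<in> {1..<k}" for i
      proof (cases "odd i")
        case True then show ?thesis unfolding lift_def by simp
      next
        case False
        then have "odd (k - i)" using \<open>odd k\<close> that by auto
        then show ?thesis unfolding lift_def using zero_pow by simp
      qed
      then have "(\<Sum>i\<in>{1..<k}. lift c i * lift d (k - i) ^ (q ^ i)) = 0" by (intro sum.neutral) blast
      then show ?thesis using True unfolding od_def U_mult_def lift_def by simp
    qed (simp add: od_def)
  qed
  have "?P = (\<lambda>i. lift (pr h ?P) i + od ?P i)" using decomp[OF PH] by simp
  also have "\<dots> = lift (UL_mult h c d)" unfolding prP odP by simp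
  finally show ?thesis by simp
qed

lemma part1:
  fixes \<nu> :: "(nat \<Rightarrow> 'a) \<Rightarrow> complex"
  assumes nu: "is_character (H'_grp h q) \<nu>" and agree: "\<forall>a\<in>H0'_carrier h. \<nu> a = psi_tilde h \<psi> a"
  shows "\<exists>\<chi>\<in>A_psi h \<psi>. \<nu> = sharp h \<chi>"
proof -
  interpret H: group "H'_grp h q :: (nat \<Rightarrow> 'a) monoid" by (rule group_H')
  interpret UL: comm_group "UL_grp h :: (nat \<Rightarrow> 'a) monoid" by (rule comm_group_UL)
  have nz: "\<And>x. x \<in> H'_carrier h \<Longrightarrow> \<nu> x \<noteq> 0"
    and nm: "\<And>x y. x \<in> H'_carrier h \<Longrightarrow> y \<in> H'_carrier h \<Longrightarrow> \<nu> (U_mult h q x y) = \<nu> x * \<nu> y"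
    and no: "\<And>x. x \<notin> H'_carrier h \<Longrightarrow> \<nu> x = 0"
    using nu unfolding is_character_def by (simp_all add: carrier_H' mult_H')
  define \<chi> where "\<chi> = (\<lambda>c. if c \<in> UL_carrier h then \<nu> (lift c) else 0)"
  have ch: "is_character (UL_grp h) \<chi>"
    unfolding is_character_def carrier_UL mult_UL
  proof (intro conjI ballI allI impI)
    fix x :: "nat \<Rightarrow> 'a" assume "x \<in> UL_carrier h" then show "\<chi> x \<noteq> 0"
      unfolding \<chi>_def using nz lift_H'0 by simp
  next
    fix x y :: "nat \<Rightarrow> 'a" assume xy: "x \<in> UL_carrier h" "y \<in> UL_carrier h"
    have "UL_mult h x y \<in> UL_carrier h" unfolding UL_mult_def UL_carrier_def by auto
    then show "\<chi> (UL_mult h x y) = \<chi> x * \<chi> y"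
      unfolding \<chi>_def using xy lift_hom nm lift_H'0 by simp
  next
    fix x :: "nat \<Rightarrow> 'a" assume "x \<notin> UL_carrier h" then show "\<chi> x = 0" unfolding \<chi>_def by simp
  qed
  have ext: "\<forall>s\<in>Sh h. \<chi> s = psi' h \<psi> s"
  proof
    fix s :: "nat \<Rightarrow> 'a" assume s: "s \<in> Sh h"
    then have sU: "s \<in> UL_carrier h" using Sh_UL by auto
    have "lift s \<in> H0'_carrier h" using H0'_iff lift_H'0[OF sU] s by simp
    then have "\<nu> (lift s) = \<psi> (pr h (lift s) (h-1))" using agree psi_tilde_H0' by simp
    then show "\<chi> s = psi' h \<psi> s" unfolding \<chi>_def psi'_def using s sU lift_H'0[OF sU] by simp
  qed
  have chiA: "\<chi> \<in> A_psi h \<psi>" unfolding A_eq extn_def using ch ext by simp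
  have "\<nu> = sharp h \<chi>"
  proof
    fix a :: "nat \<Rightarrow> 'a"
    show "\<nu> a = sharp h \<chi> a"
    proof (cases "a \<in> H'_carrier h")
      case False then show ?thesis using no by (simp add: sharp_eq)
    next
      case True
      let ?l = "lift (pr h a)"
      have l: "?l \<in> H'_carrier h" "pr h ?l = pr h a" using lift_H'0[OF pr_UL] by auto
      have lc: "?l \<in> carrier (H'_grp h q)" and ac: "a \<in> carrier (H'_grp h q)" using l True by (simp_all add: carrier_H')
      define n where "n = inv\<^bsub>H'_grp h q\<^esub> ?l \<otimes>\<^bsub>H'_grp h q\<^esub> a"
      have nc: "n \<in> carrier (H'_grp h q)" unfolding n_def using lc ac by simp
      then have nH: "n \<in> H'_carrier h" by (simp add: carrier_H')
      have il: "inv\<^bsub>H'_grp h q\<^esub> ?l \<in> H'_carrier h" using H.inv_closed[OF lc] by (simp add: carrier_H')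
      have pa: "pr h a \<in> carrier (UL_grp h)" using pr_UL by (simp add: carrier_UL)
      have "pr h n = UL_mult h (pr h (inv\<^bsub>H'_grp h q\<^esub> ?l)) (pr h a)"
        unfolding n_def mult_H' using pr_hom[OF il True] by simp
      also have "\<dots> = inv\<^bsub>UL_grp h\<^esub> (pr h a) \<otimes>\<^bsub>UL_grp h\<^esub> pr h a"
        unfolding pr_inv[OF l(1)] l(2) mult_UL ..
      also have "\<dots> = (\<lambda>_. 0)" using UL.l_inv[OF pa] by (simp add: one_UL)
      finally have pn: "pr h n = (\<lambda>_. 0)" .
      have "(\<lambda>_. 0) \<in> (Sh h :: (nat \<Rightarrow> 'a) set)" unfolding Sh_def UL_carrier_def by simp
      then have "n \<in> H0'_carrier h" using H0'_iff nH pn by simp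
      then have nn: "\<nu> n = 1" using agree psi_tilde_H0' pn psi0 by simp
      have "a = ?l \<otimes>\<^bsub>H'_grp h q\<^esub> n" unfolding n_def using lc ac
        by (simp add: H.m_assoc[symmetric])
      then have "\<nu> a = \<nu> ?l * \<nu> n" using nm[OF l(1) nH] by (simp add: mult_H')
      then have "\<nu> a = \<nu> ?l" using nn by simp
      moreover have "pr h a \<in> UL_carrier h" by (rule pr_UL)
      ultimately show ?thesis using True unfolding sharp_eq \<chi>_def by simp
    qed
  qed
  then show ?thesis using chiA by blast
qed

end

theorem lemma2p6:
  fixes p q r h :: nat and \<psi> :: "'a::{field,finite} \<Rightarrow> complex"
  assumes "prime p" and "r \<ge> 1" and "q = p ^ r" and "card (UNIV :: 'a set) = q ^ 2"
    and "h \<ge> 3" and "odd h"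
    and "additive_character \<psi>" and "has_conductor_q2 q \<psi>"
  shows "(\<forall>\<nu>. is_character (H'_grp h q) \<nu> \<and> (\<forall>a\<in>H0'_carrier h. \<nu> a = psi_tilde h \<psi> a)
             \<longrightarrow> (\<exists>\<chi>\<in>A_psi h \<psi>. \<nu> = sharp h \<chi>))
       \<and> (\<forall>g\<in>H'_carrier h. ind_char (H'_grp h q) (H0'_carrier h) (psi_tilde h \<psi>) g
             = (\<Sum>\<chi>\<in>A_psi h \<psi>. sharp h \<chi> g))"
proof -
  interpret lctx p r q h \<psi>
    by unfold_locales (use assms in auto)
  show ?thesis using part1 part2 by blast
qed

end
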